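(* Let $T$ be a finite tree and let $P=p_0p_1\dots p_k$ ($k\ge1$) be a path in $T$ such that each of $p_1,\dots,p_{k-1}$ has degree $2$ in $T$. Let $B$ be the vertex set of the component containing $p_k$ of the graph obtained from $T$ by deleting the edges of $P$, and assume $B$ is not trivial (i.e. $p_k$ has a neighbour not on $P$). If $k$ is odd, then for every $\ell\ge1$, \[\omega_{\ell}(p_0,T[B\cup P])-\omega_{\ell}(p_0,P)\leq \omega_{\ell-1}(p_k,T[B\cup P])-\omega_{\ell-1}(p_k,P).\]
   Context: $T[B\cup P]$ is the subgraph of $T$ induced by $B\cup\{p_0,\dots,p_k\}$. For a graph $G$, a vertex $x$ and $\ell\ge0$, $\omega_\ell(x,G)$ is the number of walks of length $\ell$ in $G$ starting at $x$. $P$ is regarded as a graph (the path). *)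

theory Defs
  imports Main
begin

definition simple_graph :: "'a set \<Rightarrow> 'a set set \<Rightarrow> bool" where
  "simple_graph V E \<longleftrightarrow> finite V \<and> (\<forall>e\<in>E. \<exists>u v. e = {u, v} \<and> u \<noteq> v \<and> u \<in> V \<and> v \<in> V)"

definition degree :: "'a set set \<Rightarrow> 'a \<Rightarrow> nat" where
  "degree E v = card {e \<in> E. v \<in> e}"

text \<open>Walks of length l: vertex lists of length l+1, consecutive vertices adjacent.\<close>
definition is_walk :: "'a set \<Rightarrow> 'a set set \<Rightarrow> 'a list \<Rightarrow> bool" where
  "is_walk V E xs \<longleftrightarrow> xs \<noteq> [] \<and> set xs \<subseteq> V \<and>
     (\<forall>i. Suc i < length xs \<longrightarrow> {xs ! i, xs ! Suc i} \<in> E)"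

definition walks_count :: "nat \<Rightarrow> 'a \<Rightarrow> 'a set \<Rightarrow> 'a set set \<Rightarrow> nat" where
  "walks_count l x V E = card {xs. is_walk V E xs \<and> length xs = Suc l \<and> hd xs = x}"

definition reachable :: "'a set \<Rightarrow> 'a set set \<Rightarrow> 'a \<Rightarrow> 'a \<Rightarrow> bool" where
  "reachable V E u v \<longleftrightarrow> (\<exists>xs. is_walk V E xs \<and> hd xs = u \<and> last xs = v)"

definition connected_graph :: "'a set \<Rightarrow> 'a set set \<Rightarrow> bool" where
  "connected_graph V E \<longleftrightarrow> V \<noteq> {} \<and> (\<forall>u\<in>V. \<forall>v\<in>V. reachable V E u v)"

definition is_cycle :: "'a set \<Rightarrow> 'a set set \<Rightarrow> 'a list \<Rightarrow> bool" where
  "is_cycle V E xs \<longleftrightarrow> length xs \<ge> 3 \<and> distinct xs \<and> is_walk V E xs \<and> {last xs, hd xs} \<in> E"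

definition acyclic_graph :: "'a set \<Rightarrow> 'a set set \<Rightarrow> bool" where
  "acyclic_graph V E \<longleftrightarrow> (\<nexists>xs. is_cycle V E xs)"

definition is_tree :: "'a set \<Rightarrow> 'a set set \<Rightarrow> bool" where
  "is_tree V E \<longleftrightarrow> simple_graph V E \<and> connected_graph V E \<and> acyclic_graph V E"

definition is_path :: "'a set \<Rightarrow> 'a set set \<Rightarrow> 'a list \<Rightarrow> bool" where
  "is_path V E ps \<longleftrightarrow> is_walk V E ps \<and> distinct ps"

definition path_edges :: "'a list \<Rightarrow> 'a set set" where
  "path_edges ps = {{ps ! i, ps ! Suc i} | i. Suc i < length ps}"

definition component :: "'a set \<Rightarrow> 'a set set \<Rightarrow> 'a \<Rightarrow> 'a set" where
  "component V E v = {u \<in> V. reachable V E v u}"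

definition induced_edges :: "'a set set \<Rightarrow> 'a set \<Rightarrow> 'a set set" where
  "induced_edges E S = {e \<in> E. e \<subseteq> S}"

end

theory Submission
  imports Defs
begin


lemma walk_mono: "is_walk V E1 xs \<Longrightarrow> E1 \<subseteq> E2 \<Longrightarrow> is_walk V E2 xs"
  unfolding is_walk_def by blast

lemma walk_append:
  assumes "is_walk V E xs" "is_walk V E (y#ys)" "last xs = y"
  shows "is_walk V E (xs @ ys)"
  unfolding is_walk_def
proof (intro conjI allI impI)
  show "xs @ ys \<noteq> []" using assms(1) unfolding is_walk_def by simp
  show "set (xs @ ys) \<subseteq> V" using assms(1,2) unfolding is_walk_def by auto
  fix i assume i: "Suc i < length (xs @ ys)"
  have xne: "xs \<noteq> []" using assms(1) unfolding is_walk_def by simp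
  show "{(xs @ ys) ! i, (xs @ ys) ! Suc i} \<in> E"
  proof (cases "Suc i < length xs")
    case True then show ?thesis using assms(1) unfolding is_walk_def by (simp add: nth_append)
  next
    case False
    then have "i \<ge> length xs - 1" by simp
    show ?thesis
    proof (cases "i = length xs - 1")
      case True
      have "(xs @ ys) ! i = y" using True xne assms(3) by (simp add: nth_append last_conv_nth)
      moreover have "(xs @ ys) ! Suc i = (y#ys) ! 1" using True xne by (simp add: nth_append)
      moreover have "Suc 0 < length (y#ys)" using i True xne by simp
      moreover have "{(y#ys) ! 0, (y#ys) ! Suc 0} \<in> E" using assms(2) \<open>Suc 0 < length (y#ys)\<close> unfolding is_walk_def by blast
      ultimately show ?thesis by simp
    next
      case F2: False
      then have ii: "i \<ge> length xs" using False by simp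
      define j where "j = i - length xs"
      have "(xs @ ys) ! i = (y#ys) ! Suc j" using ii by (simp add: nth_append j_def)
      moreover have "(xs @ ys) ! Suc i = (y#ys) ! Suc (Suc j)" using ii
        by (simp add: nth_append j_def Suc_diff_le)
      moreover have "Suc (Suc j) < length (y#ys)" using i ii by (simp add: j_def)
      ultimately show ?thesis using assms(2) unfolding is_walk_def by metis
    qed
  qed
qed

lemma walk_shortcut:
  assumes w: "is_walk V E xs" and ij: "i < j" "j < length xs" and eq: "xs ! i = xs ! j"
  shows "is_walk V E (take i xs @ drop j xs)"
proof (cases "i = 0")
  case True
  have "is_walk V E (drop j xs)" using w ij unfolding is_walk_def
    by (auto dest: in_set_dropD) 
  then show ?thesis using True by simp
next
  case False
  have w1: "is_walk V E (take i xs)" using w ij False unfolding is_walk_def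
    by (auto dest: in_set_takeD)
  have dj: "drop j xs = xs ! j # drop (Suc j) xs" using ij by (simp add: Cons_nth_drop_Suc)
  have w2: "is_walk V E (xs ! (i-1) # drop j xs)"
    unfolding is_walk_def
  proof (intro conjI allI impI)
    show "xs ! (i-1) # drop j xs \<noteq> []" by simp
    show "set (xs ! (i - 1) # drop j xs) \<subseteq> V" using w ij unfolding is_walk_def
      by (auto dest: in_set_dropD)
    fix n assume n: "Suc n < length (xs ! (i - 1) # drop j xs)"
    show "{(xs ! (i - 1) # drop j xs) ! n, (xs ! (i - 1) # drop j xs) ! Suc n} \<in> E"
    proof (cases n)
      case 0
      have "{xs ! (i-1), xs ! Suc (i-1)} \<in> E" using w ij False unfolding is_walk_def
        by (metis Suc_pred' bot_nat_0.not_eq_extremum order.strict_trans)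
      then show ?thesis using 0 dj eq False by simp
    next
      case (Suc n')
      have "{xs ! (j + n'), xs ! Suc (j+n')} \<in> E" using w n Suc unfolding is_walk_def by auto
      then show ?thesis using Suc n ij by simp
    qed
  qed
  have "last (take i xs) = xs ! (i-1)" using False ij
  proof -
    have "take i xs \<noteq> []" "length (take i xs) = i" using False ij by auto
    then have "last (take i xs) = take i xs ! (i - 1)" by (simp add: last_conv_nth)
    also have "\<dots> = xs ! (i-1)" using False by simp
    finally show ?thesis .
  qed
  then show ?thesis using walk_append[OF w1 w2] by simp
qed

lemma walk_distinct:
  "is_walk V E xs \<Longrightarrow> \<exists>ys. is_walk V E ys \<and> distinct ys \<and> hd ys = hd xs \<and> last ys = last xs"
proof (induction "length xs" arbitrary: xs rule: less_induct)
  case less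
  show ?case
  proof (cases "distinct xs")
    case True then show ?thesis using less.prems by blast
  next
    case False
    then obtain i j where ij: "i < j" "j < length xs" "xs ! i = xs ! j"
      by (metis distinct_conv_nth linorder_neqE_nat)
    let ?ys = "take i xs @ drop j xs"
    have w: "is_walk V E ?ys" using walk_shortcut[OF less.prems ij] .
    have len: "length ?ys < length xs" using ij by simp
    have hd: "hd ?ys = hd xs"
    proof (cases "i = 0")
      case True then show ?thesis using ij by (metis append_Nil hd_conv_nth hd_drop_conv_nth list.size(3) not_less_zero take_0)
    next
      case False
      have "xs \<noteq> []" using ij by auto
      then show ?thesis using ij False by (cases xs) auto
    qed
    have lst: "last ?ys = last xs" using ij by simp
    show ?thesis using less.hyps[OF len w] hd lst by metis
  qed
qed

lemma acyclic_edge: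
  assumes acyc: "acyclic_graph V E" and e: "{a,b} \<in> E" and ab: "a \<noteq> b"
    and w: "is_walk V (E - {{a,b}}) xs" and h: "hd xs = b" and l: "last xs = a"
  shows False
proof -
  obtain ys where ys: "is_walk V (E - {{a,b}}) ys" "distinct ys" "hd ys = b" "last ys = a"
    using walk_distinct[OF w] h l by metis
  have ne: "ys \<noteq> []" using ys unfolding is_walk_def by simp
  have "length ys \<noteq> 1" using ys ne ab
    by (metis One_nat_def hd_conv_nth last_conv_nth diff_Suc_1 le_numeral_extra(4) length_0_conv)
  moreover have "length ys \<noteq> 2"
  proof
    assume "length ys = 2"
    then have "{ys!0, ys!1} \<in> E - {{a,b}}" using ys unfolding is_walk_def by auto
    moreover have "ys ! 0 = b" "ys ! 1 = a" using ys ne \<open>length ys = 2\<close>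
      by (auto simp: hd_conv_nth last_conv_nth)
    ultimately show False by (auto simp: insert_commute)
  qed
  ultimately have "length ys \<ge> 3" using ne by (cases "length ys") auto
  moreover have "is_walk V E ys" using walk_mono[OF ys(1)] by blast
  ultimately have "is_cycle V E ys" using ys e unfolding is_cycle_def by auto
  then show False using acyc unfolding acyclic_graph_def by blast
qed

lemma walk_snoc_edge:
  assumes "is_walk V E xs" "y \<in> V" "{last xs, y} \<in> E"
  shows "is_walk V E (xs @ [y])"
proof -
  have "is_walk V E [last xs, y]" using assms unfolding is_walk_def
    by (auto simp: less_Suc_eq nth_Cons split: nat.splits)
  then show ?thesis using walk_append[OF assms(1)] by simp
qed

lemma count_split:
  assumes fin: "finite S" and PS: "P \<subseteq> S" and PE: "PE \<subseteq> GE"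
  shows "walks_count n x S GE = card {xs. is_walk S GE xs \<and> length xs = Suc n \<and> hd xs = x \<and> \<not> is_walk P PE xs}
     + walks_count n x P PE"
proof -
  let ?G = "{xs. is_walk S GE xs \<and> length xs = Suc n \<and> hd xs = x}"
  let ?L = "{xs. is_walk S GE xs \<and> length xs = Suc n \<and> hd xs = x \<and> \<not> is_walk P PE xs}"
  let ?P = "{xs. is_walk P PE xs \<and> length xs = Suc n \<and> hd xs = x}"
  have sub: "?P \<subseteq> ?G" using PS PE unfolding is_walk_def by blast
  have "?G \<subseteq> {xs. set xs \<subseteq> S \<and> length xs = Suc n}" unfolding is_walk_def by blast
  then have finG: "finite ?G" using finite_lists_length_eq[OF fin] finite_subset by blast
  have "?G = ?L \<union> ?P" using sub by blast
  moreover have "?L \<inter> ?P = {}" by blast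
  moreover have "finite ?L" by (rule finite_subset[OF _ finG]) blast
  moreover have "finite ?P" using finG sub by (auto intro: finite_subset)
  ultimately have "card ?G = card ?L + card ?P" by (simp add: card_Un_disjoint)
  then show ?thesis unfolding walks_count_def by simp
qed




locale lsetup =
  fixes V :: "'a set" and E :: "'a set set" and ps :: "'a list" and k :: nat and B :: "'a set"
  assumes tree: "is_tree V E"
    and path: "is_path V E ps" and len: "length ps = Suc k" and k1: "k \<ge> 1"
    and deg2: "\<forall>i. 1 \<le> i \<and> i \<le> k - 1 \<longrightarrow> degree E (ps ! i) = 2"
    and B_def: "B = component V (E - path_edges ps) (ps ! k)"
    and B_nontriv: "B \<noteq> {ps ! k}"
    and kodd: "odd k"
begin

lemma simple: "simple_graph V E" and acyc: "acyclic_graph V E" and finV: "finite V"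
  using tree unfolding is_tree_def simple_graph_def by auto

lemma pw: "is_walk V E ps" and dist: "distinct ps"
  using path unfolding is_path_def by auto

lemma psV: "i \<le> k \<Longrightarrow> ps ! i \<in> V"
  using pw len unfolding is_walk_def by (metis le_imp_less_Suc nth_mem subsetD)

lemma pedge: "i < k \<Longrightarrow> {ps ! i, ps ! Suc i} \<in> E"
  using pw len unfolding is_walk_def by auto

lemma ppe: "i < k \<Longrightarrow> {ps ! i, ps ! Suc i} \<in> path_edges ps"
  using len unfolding path_edges_def by auto

lemma PE_sub: "path_edges ps \<subseteq> E"
  using pedge len unfolding path_edges_def by auto

lemma pinj: "i \<le> k \<Longrightarrow> j \<le> k \<Longrightarrow> ps ! i = ps ! j \<longleftrightarrow> i = j"
  using dist len by (simp add: nth_eq_iff_index_eq)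

lemma sE: "e \<in> E \<Longrightarrow> \<exists>u v. e = {u, v} \<and> u \<noteq> v \<and> u \<in> V \<and> v \<in> V"
proof -
  assume e: "e \<in> E"
  have "\<forall>e\<in>E. \<exists>u v. e = {u, v} \<and> u \<noteq> v \<and> u \<in> V \<and> v \<in> V"
    using simple unfolding simple_graph_def by (rule conjunct2)
  then show ?thesis using e by (rule bspec)
qed

lemma edge_ne: "{a, b} \<in> E \<Longrightarrow> a \<noteq> b"
proof
  assume ab: "{a, b} \<in> E" "a = b"
  obtain x y where xy: "{a, b} = {x, y}" "x \<noteq> y" using sE[OF ab(1)] by blast
  have "x \<in> {a, b}" "y \<in> {a, b}" unfolding xy(1) by simp_all
  then show False using xy(2) ab(2) by simp
qed

lemma edge_V: "{a, b} \<in> E \<Longrightarrow> a \<in> V \<and> b \<in> V"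
proof -
  assume ab: "{a, b} \<in> E"
  obtain x y where xy: "{a, b} = {x, y}" "x \<in> V" "y \<in> V" using sE[OF ab] by blast
  have "a \<in> {a, b}" "b \<in> {a, b}" by simp_all
  then have "a \<in> {x, y}" "b \<in> {x, y}" unfolding xy(1) .
  then show ?thesis using xy by blast
qed

lemma BV: "B \<subseteq> V" using B_def unfolding component_def by auto

lemma pkB: "ps ! k \<in> B"
proof -
  have "is_walk V (E - path_edges ps) [ps ! k]" using psV[of k] unfolding is_walk_def by auto
  then have "reachable V (E - path_edges ps) (ps ! k) (ps ! k)" unfolding reachable_def
    by (intro exI[of _ "[ps ! k]"]) simp
  then show ?thesis using B_def psV[of k] unfolding component_def by blast
qed

lemma doubl: "{a, w} = {a, b} \<Longrightarrow> w = b"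
  by (auto simp add: doubleton_eq_iff)

lemma nbr_mid:
  assumes j: "1 \<le> j" "j \<le> k - 1" and e: "{ps ! j, w} \<in> E"
  shows "w = ps ! (j - 1) \<or> w = ps ! Suc j"
proof -
  let ?X = "{e \<in> E. ps ! j \<in> e}"
  have c: "card ?X = 2" using deg2 j unfolding degree_def by simp
  then have fin: "finite ?X" by (intro card_ge_0_finite) simp
  let ?e1 = "{ps ! j, ps ! (j-1)}" and ?e2 = "{ps ! j, ps ! Suc j}"
  have e1: "?e1 \<in> ?X" using pedge[of "j-1"] j by (simp add: insert_commute)
  have e2: "?e2 \<in> ?X" using pedge[of j] j by simp
  have n1: "ps ! (j-1) \<noteq> ps ! Suc j" "ps ! (j-1) \<noteq> ps ! j" using pinj j by auto
  have "?e1 \<noteq> ?e2"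
  proof
    assume "?e1 = ?e2"
    then have "ps ! (j-1) \<in> ?e2" by blast
    then show False using n1 by blast
  qed
  then have "card {?e1, ?e2} = 2" by simp
  then have cc: "card {?e1, ?e2} = card ?X" using c by simp
  have sub: "{?e1, ?e2} \<subseteq> ?X" using e1 e2 by blast
  have "{?e1, ?e2} = ?X" using card_subset_eq[OF fin sub cc] .
  moreover have "{ps ! j, w} \<in> ?X" using e by simp
  ultimately have "{ps ! j, w} \<in> {?e1, ?e2}" by (simp only:)
  then have "{ps ! j, w} = ?e1 \<or> {ps ! j, w} = ?e2" by (simp only: insert_iff empty_iff simp_thms)
  then show ?thesis using doubl[of "ps ! j" w] by blast
qed


lemma seg_walk:
  assumes "1 \<le> a" "a \<le> b" "b \<le> k"
  shows "is_walk V (E - {{ps ! 0, ps ! 1}}) (map ((!) ps) [a..<Suc b])"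
  unfolding is_walk_def
proof (intro conjI allI impI)
  show "map ((!) ps) [a..<Suc b] \<noteq> []" using assms by simp
  show "set (map ((!) ps) [a..<Suc b]) \<subseteq> V" using assms psV by auto
  fix i assume i: "Suc i < length (map ((!) ps) [a..<Suc b])"
  then have ii: "a + Suc i \<le> b" by (simp del: upt_Suc)
  have "{ps ! (a+i), ps ! Suc (a+i)} \<in> E" using pedge ii assms by simp
  moreover have "ps ! 0 \<notin> {ps ! (a+i), ps ! Suc (a+i)}" using pinj ii assms by auto
  ultimately have "{ps ! (a+i), ps ! Suc (a+i)} \<in> E - {{ps ! 0, ps ! 1}}"
    by blast
  moreover have "map ((!) ps) [a..<Suc b] ! i = ps ! (a+i)" "map ((!) ps) [a..<Suc b] ! Suc i = ps ! Suc (a+i)"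
    using ii by (simp_all del: upt_Suc)
  ultimately show "{map ((!) ps) [a..<Suc b] ! i, map ((!) ps) [a..<Suc b] ! Suc i} \<in> E - {{ps ! 0, ps ! 1}}"
    by simp
qed

lemma seg_hd: "a \<le> b \<Longrightarrow> hd (map ((!) ps) [a..<Suc b]) = ps ! a"
  by (simp add: upt_conv_Cons del: upt_Suc)

lemma seg_last: "a \<le> b \<Longrightarrow> last (map ((!) ps) [a..<Suc b]) = ps ! b"
  by simp

lemma nbr0:
  assumes e: "{ps ! 0, w} \<in> E" and wS: "w \<in> B \<union> set ps"
  shows "w = ps ! 1"
proof (rule ccontr)
  assume w1: "w \<noteq> ps ! 1"
  have e01: "{ps ! 0, ps ! 1} \<in> E" using pedge[of 0] k1 by simp
  have n01: "ps ! 0 \<noteq> ps ! 1" using pinj k1 by auto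
  have w0: "w \<noteq> ps ! 0" using edge_ne e by auto
  have wV: "w \<in> V" using edge_V e by auto
  have ew0: "{w, ps ! 0} \<in> E" using e by (simp add: insert_commute)
  have "{w, ps ! 0} \<noteq> {ps ! 0, ps ! 1}"
  proof
    assume "{w, ps ! 0} = {ps ! 0, ps ! 1}"
    then have "w \<in> {ps ! 0, ps ! 1}" by (metis insertI1)
    then show False using w0 w1 by blast
  qed
  then have ew: "{w, ps ! 0} \<in> E - {{ps ! 0, ps ! 1}}" using ew0 by blast
  obtain xs where xs: "is_walk V (E - {{ps ! 0, ps ! 1}}) xs" "hd xs = ps ! 1" "last xs = w"
  proof (cases "w \<in> set ps")
    case True
    then obtain i where i: "i \<le> k" "w = ps ! i" using len by (metis in_set_conv_nth less_Suc_eq_le)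
    have "i \<noteq> 0" "i \<noteq> 1" using i w0 w1 by (metis One_nat_def)+
    then have "1 \<le> i" by simp
    have w1: "is_walk V (E - {{ps ! 0, ps ! 1}}) (map ((!) ps) [1..<Suc i])"
      using seg_walk[of 1 i] \<open>1 \<le> i\<close> i(1) by blast
    have h1: "hd (map ((!) ps) [1..<Suc i]) = ps ! 1" using seg_hd[of 1 i] \<open>1 \<le> i\<close> by blast
    have l1: "last (map ((!) ps) [1..<Suc i]) = w" using seg_last[of 1 i] \<open>1 \<le> i\<close> i(2) by blast
    show ?thesis using that[OF w1 h1 l1] .
  next
    case False
    then have "w \<in> B" using wS by simp
    then have "w \<in> component V (E - path_edges ps) (ps ! k)" using B_def by simp
    then have "reachable V (E - path_edges ps) (ps ! k) w" unfolding component_def by simp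
    then obtain rw where rw: "is_walk V (E - path_edges ps) rw" "hd rw = ps ! k" "last rw = w"
      unfolding reachable_def by blast
    have p01: "{ps ! 0, ps ! 1} \<in> path_edges ps" using ppe[of 0] k1 by simp
    have "E - path_edges ps \<subseteq> E - {{ps ! 0, ps ! 1}}" using p01 by blast
    then have rw2: "is_walk V (E - {{ps ! 0, ps ! 1}}) rw" using walk_mono[OF rw(1)] by blast
    have rne: "rw \<noteq> []" using rw unfolding is_walk_def by simp
    then have rweq: "rw = ps ! k # tl rw" using rw(2) by (cases rw) simp_all
    let ?s = "map ((!) ps) [1..<Suc k]"
    have rw3: "is_walk V (E - {{ps ! 0, ps ! 1}}) (ps ! k # tl rw)" using rw2 by (simp only: rweq[symmetric])
    have sw: "is_walk V (E - {{ps ! 0, ps ! 1}}) ?s" using seg_walk[of 1 k] k1 by blast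
    have sl: "last ?s = ps ! k" using seg_last[of 1 k] k1 by blast
    have sh: "hd ?s = ps ! 1" using seg_hd[of 1 k] k1 by blast
    have "is_walk V (E - {{ps ! 0, ps ! 1}}) (?s @ tl rw)"
      using walk_append[OF sw rw3 sl] .
    moreover have "hd (?s @ tl rw) = ps ! 1"
    proof -
      have "?s \<noteq> []" using k1 by (simp del: upt_Suc)
      then show ?thesis using sh hd_append2 by metis
    qed
    moreover have "last (?s @ tl rw) = w"
    proof (cases "tl rw = []")
      case True
      then have "rw = [ps ! k]" using rne rw(2) by (cases rw) auto
      then show ?thesis using True rw(3) sl by simp
    next
      case False
      then have "last rw = last (tl rw)" using rne by (cases rw) auto
      then show ?thesis using rw(3) False by simp
    qed
    ultimately show ?thesis using that by blast
  qed
  have xw: "is_walk V (E - {{ps ! 0, ps ! 1}}) (xs @ [ps ! 0])"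
    using walk_snoc_edge[OF xs(1) psV[of 0]] xs(3) ew by simp
  have xh: "hd (xs @ [ps ! 0]) = ps ! 1" using xs unfolding is_walk_def by simp
  have xl: "last (xs @ [ps ! 0]) = ps ! 0" by simp
  show False using acyclic_edge[OF acyc e01 n01 xw xh xl] .
qed

lemma nbr:
  assumes j: "j < k" and e: "{ps ! j, w} \<in> E" and wS: "w \<in> B \<union> set ps"
  shows "(j \<ge> 1 \<and> w = ps ! (j - 1)) \<or> w = ps ! Suc j"
proof (cases "j = 0")
  case True then show ?thesis using nbr0 e wS by simp
next
  case False then show ?thesis using nbr_mid[of j w] e j by auto
qed

end



context lsetup begin

abbreviation "S \<equiv> B \<union> set ps"
abbreviation "GE \<equiv> induced_edges E S"

definition m :: nat where "m = Suc k div 2"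

lemma m_props: "Suc k = 2 * m" "1 \<le> m" "m \<le> k"
  using kodd k1 unfolding m_def by (auto elim!: oddE)

lemma GE_D: "{a, b} \<in> GE \<Longrightarrow> {a, b} \<in> E \<and> b \<in> S"
  unfolding induced_edges_def by auto

lemma GE_I: "e \<in> E \<Longrightarrow> e \<subseteq> S \<Longrightarrow> e \<in> GE"
  unfolding induced_edges_def by auto

lemma ps_S: "i \<le> k \<Longrightarrow> ps ! i \<in> S"
  using len by simp

lemma pe_GE: "i < k \<Longrightarrow> {ps ! i, ps ! Suc i} \<in> GE"
  using pedge ps_S by (intro GE_I) auto

lemma pe_step: "j < k \<Longrightarrow> (1 \<le> j \<and> w = ps ! (j - 1)) \<or> w = ps ! Suc j \<Longrightarrow> {ps ! j, w} \<in> path_edges ps"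
proof -
  assume j: "j < k" and w: "(1 \<le> j \<and> w = ps ! (j - 1)) \<or> w = ps ! Suc j"
  show ?thesis
  proof (cases "w = ps ! Suc j")
    case True then show ?thesis using ppe j by simp
  next
    case False
    then have "1 \<le> j" "w = ps ! (j - 1)" using w by auto
    then have "{ps ! (j-1), ps ! Suc (j-1)} \<in> path_edges ps" using ppe[of "j-1"] j by simp
    then show ?thesis using \<open>1 \<le> j\<close> \<open>w = ps ! (j - 1)\<close> by (simp add: insert_commute)
  qed
qed

lemma u_ex: "\<exists>u. u \<in> B \<and> {ps ! k, u} \<in> E \<and> {ps ! k, u} \<notin> path_edges ps \<and> (\<forall>j. 1 \<le> j \<longrightarrow> j \<le> k \<longrightarrow> u \<noteq> ps ! j)"
proof -
  obtain w where w: "w \<in> B" "w \<noteq> ps ! k" using B_nontriv pkB by blast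
  then have "w \<in> component V (E - path_edges ps) (ps ! k)" using B_def by simp
  then have "reachable V (E - path_edges ps) (ps ! k) w" unfolding component_def by simp
  then obtain rw where rw: "is_walk V (E - path_edges ps) rw" "hd rw = ps ! k" "last rw = w"
    unfolding reachable_def by blast
  have rne: "rw \<noteq> []" using rw unfolding is_walk_def by simp
  have "length rw \<noteq> 1"
  proof
    assume "length rw = 1"
    then have "hd rw = last rw" by (cases rw) auto
    then show False using rw w by simp
  qed
  moreover have "length rw > 0" using rne by simp
  ultimately have l2: "Suc 1 \<le> length rw" by linarith
  define u where "u = rw ! 1"
  have "{rw ! 0, rw ! Suc 0} \<in> E - path_edges ps" using rw(1) l2 unfolding is_walk_def by auto
  moreover have "rw ! 0 = ps ! k" using rw(2) rne by (simp add: hd_conv_nth)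
  ultimately have eu: "{ps ! k, u} \<in> E - path_edges ps" unfolding u_def by simp
  have uV: "u \<in> V" using edge_V eu by blast
  have "is_walk V (E - path_edges ps) [ps ! k, u]"
    using eu uV psV[of k] unfolding is_walk_def by (auto simp: less_Suc_eq nth_Cons split: nat.splits)
  then have "reachable V (E - path_edges ps) (ps ! k) u" unfolding reachable_def
    by (intro exI[of _ "[ps ! k, u]"]) simp
  then have uB: "u \<in> B" using B_def uV unfolding component_def by simp
  have un: "u \<noteq> ps ! j" if j: "1 \<le> j" "j \<le> k" for j
  proof
    assume uj: "u = ps ! j"
    show False
    proof (cases "j = k")
      case True then show False using edge_ne eu uj by blast
    next
      case False
      then have j2: "j \<le> k - 1" using j by simp
      have "{ps ! j, ps ! k} \<in> E" using eu uj by (simp add: insert_commute)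
      then have "ps ! k = ps ! (j - 1) \<or> ps ! k = ps ! Suc j" using nbr_mid[OF j(1) j2] by blast
      then have "k = Suc j"
      proof
        assume "ps ! k = ps ! (j - 1)"
        then have "k = j - 1" using pinj[of k "j-1"] j by simp
        then show ?thesis using j by simp
      next
        assume "ps ! k = ps ! Suc j"
        then show ?thesis using pinj[of k "Suc j"] j2 j by simp
      qed
      then have "{ps ! j, ps ! k} \<in> path_edges ps" using ppe[of j] by simp
      then show False using eu uj by (simp add: insert_commute)
    qed
  qed
  show ?thesis using uB eu un by blast
qed

definition u where "u = (SOME u. u \<in> B \<and> {ps ! k, u} \<in> E \<and> {ps ! k, u} \<notin> path_edges ps \<and> (\<forall>j. 1 \<le> j \<longrightarrow> j \<le> k \<longrightarrow> u \<noteq> ps ! j))"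

lemma u_props: "u \<in> B" "{ps ! k, u} \<in> E" "\<And>j. 1 \<le> j \<Longrightarrow> j \<le> k \<Longrightarrow> u \<noteq> ps ! j"
  using someI_ex[OF u_ex] unfolding u_def[symmetric] by blast+

definition sig where "sig v = (if v = ps ! 0 then u else ps ! (Suc k - (THE j. j < length ps \<and> ps ! j = v)))"

lemma sig0: "sig (ps ! 0) = u" unfolding sig_def by simp

lemma sigj: assumes "1 \<le> j" "j \<le> k" shows "sig (ps ! j) = ps ! (Suc k - j)"
proof -
  have "ps ! j \<noteq> ps ! 0" using pinj assms by auto
  moreover have "(THE i. i < length ps \<and> ps ! i = ps ! j) = j"
    using assms pinj len by (intro the_equality) auto
  ultimately show ?thesis unfolding sig_def by simp
qed

lemma sig_ne_m: "j < m \<Longrightarrow> sig (ps ! j) \<noteq> ps ! m"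
proof (cases "j = 0")
  case True then show ?thesis using sig0 u_props(3)[of m] m_props by simp
next
  case False
  assume "j < m"
  then show ?thesis using sigj[of j] False m_props pinj by auto
qed

lemma sig_inj: "j1 < m \<Longrightarrow> j2 < m \<Longrightarrow> sig (ps ! j1) = sig (ps ! j2) \<Longrightarrow> j1 = j2"
proof -
  assume a: "j1 < m" "j2 < m" "sig (ps ! j1) = sig (ps ! j2)"
  show "j1 = j2"
  proof (cases "j1 = 0"; cases "j2 = 0")
    assume "j1 = 0" "j2 \<noteq> 0"
    moreover have "1 \<le> Suc k - j2" "Suc k - j2 \<le> k" using a \<open>j2 \<noteq> 0\<close> m_props by arith+
    ultimately show ?thesis using a sig0 sigj[of j2] u_props(3)[of "Suc k - j2"] m_props by auto
  next
    assume "j1 \<noteq> 0" "j2 = 0"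
    moreover have "1 \<le> Suc k - j1" "Suc k - j1 \<le> k" using a \<open>j1 \<noteq> 0\<close> m_props by arith+
    ultimately show ?thesis using a sig0 sigj[of j1] u_props(3)[of "Suc k - j1"] m_props by auto
  next
    assume "j1 \<noteq> 0" "j2 \<noteq> 0"
    have mk: "m \<le> k" using m_props by simp
    have "ps ! (Suc k - j1) = ps ! (Suc k - j2)"
      using a sigj[of j1] sigj[of j2] \<open>j1 \<noteq> 0\<close> \<open>j2 \<noteq> 0\<close> mk by simp
    moreover have "Suc k - j1 \<le> k" "Suc k - j2 \<le> k" using \<open>j1 \<noteq> 0\<close> \<open>j2 \<noteq> 0\<close> by arith+
    ultimately have "Suc k - j1 = Suc k - j2" using pinj by blast
    then show ?thesis using a mk by arith
  qed simp
qed

lemma sig_S: "j < m \<Longrightarrow> sig (ps ! j) \<in> S"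
  using sig0 sigj[of j] u_props(1) m_props ps_S by (cases "j = 0") auto

lemma uk_GE: "{u, ps ! k} \<in> GE"
  using u_props(1,2) ps_S[of k] by (intro GE_I) (auto simp: insert_commute)

lemma sig_edge: "Suc j < m \<Longrightarrow> {sig (ps ! j), sig (ps ! Suc j)} \<in> GE"
proof (cases "j = 0")
  case True
  assume "Suc j < m"
  then show ?thesis using True sig0 sigj[of 1] uk_GE k1 by simp
next
  case False
  assume a: "Suc j < m"
  have mk: "m \<le> k" using m_props by simp
  have ar1: "Suc k - j = Suc (k - j)" using a mk by arith
  have ar2: "Suc k - Suc j = k - j" by simp
  note ar = ar1 ar2
  have e: "sig (ps ! j) = ps ! Suc (k - j)" "sig (ps ! Suc j) = ps ! (k - j)"
    using sigj[of j] sigj[of "Suc j"] False a mk ar by simp_all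
  have "{ps ! (k - j), ps ! Suc (k - j)} \<in> GE" using pe_GE mk a False by simp
  then show ?thesis using e by (simp add: insert_commute)
qed

lemma sig_last_edge: "{sig (ps ! (m - 1)), ps ! m} \<in> GE"
proof (cases "m = 1")
  case True
  then have "k = 1" using m_props by simp
  then show ?thesis using True sig0 uk_GE by simp
next
  case False
  then have "sig (ps ! (m - 1)) = ps ! Suc m" using sigj[of "m-1"] m_props by simp
  moreover have "{ps ! m, ps ! Suc m} \<in> GE" using pe_GE m_props False by simp
  ultimately show ?thesis by (simp add: insert_commute)
qed

end



context lsetup begin

lemma GE_step: "is_walk S GE W \<Longrightarrow> Suc i < length W \<Longrightarrow> {W ! i, W ! Suc i} \<in> E \<and> W ! Suc i \<in> S"
  unfolding is_walk_def using GE_D by blast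

lemma walk_nbr:
  assumes W: "is_walk S GE W" and i: "Suc i < length W" and j: "W ! i = ps ! j" "j < m"
  shows "(1 \<le> j \<and> W ! Suc i = ps ! (j - 1)) \<or> W ! Suc i = ps ! Suc j"
proof -
  have "{ps ! j, W ! Suc i} \<in> E" "W ! Suc i \<in> S" using GE_step[OF W i] j by auto
  moreover have "j < k" using j m_props by simp
  ultimately show ?thesis using nbr by blast
qed

lemma walk_pe:
  assumes W: "is_walk S GE W" and i: "Suc i < length W" and j: "W ! i = ps ! j" "j < m"
  shows "{W ! i, W ! Suc i} \<in> path_edges ps"
proof -
  have "j < k" using j m_props by simp
  then show ?thesis using pe_step walk_nbr[OF W i j] j by simp
qed

lemma pre_walk:
  assumes W: "is_walk S GE W" "hd W = ps ! 0"
  shows "i < length W \<Longrightarrow> (\<forall>i'\<le>i. W ! i' \<noteq> ps ! m) \<Longrightarrow> \<exists>j<m. W ! i = ps ! j"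
proof (induction i)
  case 0
  have "W \<noteq> []" using W unfolding is_walk_def by simp
  then have "W ! 0 = ps ! 0" using W(2) by (simp add: hd_conv_nth)
  moreover have "0 < m" using m_props by simp
  ultimately show ?case by blast
next
  case (Suc i)
  then obtain j where j: "j < m" "W ! i = ps ! j" by auto
  have ne: "W ! Suc i \<noteq> ps ! m" using Suc.prems by blast
  have "(1 \<le> j \<and> W ! Suc i = ps ! (j - 1)) \<or> W ! Suc i = ps ! Suc j"
    using walk_nbr[OF W(1) Suc.prems(1) j(2) j(1)] .
  then show ?case
  proof
    assume "1 \<le> j \<and> W ! Suc i = ps ! (j - 1)"
    then show ?case using j by (intro exI[of _ "j - 1"]) auto
  next
    assume a: "W ! Suc i = ps ! Suc j"
    then have "Suc j \<noteq> m" using ne by auto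
    then show ?case using a j by (intro exI[of _ "Suc j"]) auto
  qed
qed

definition tau :: "'a list \<Rightarrow> nat" where "tau W = (LEAST i. W ! i = ps ! m)"

lemma tau_props:
  assumes W: "is_walk S GE W" "hd W = ps ! 0" "\<not> is_walk (set ps) (path_edges ps) W"
  shows "tau W < length W" "W ! tau W = ps ! m" "\<And>i. i < tau W \<Longrightarrow> W ! i \<noteq> ps ! m"
    "1 \<le> tau W" "\<And>i. i < tau W \<Longrightarrow> \<exists>j<m. W ! i = ps ! j"
    "\<And>i. Suc i \<le> tau W \<Longrightarrow> {W ! i, W ! Suc i} \<in> path_edges ps"
    "W ! (tau W - 1) = ps ! (m - 1)"
proof -
  have Wne: "W \<noteq> []" using W unfolding is_walk_def by simp
  then have W0: "W ! 0 = ps ! 0" using W(2) by (simp add: hd_conv_nth)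
  have ex: "\<exists>i<length W. W ! i = ps ! m"
  proof (rule ccontr)
    assume "\<not> (\<exists>i<length W. W ! i = ps ! m)"
    then have all: "\<And>i. i < length W \<Longrightarrow> \<exists>j<m. W ! i = ps ! j"
      using pre_walk[OF W(1,2)] by (meson le_less_trans)
    have "is_walk (set ps) (path_edges ps) W" unfolding is_walk_def
    proof (intro conjI allI impI)
      show "W \<noteq> []" by fact
      show "set W \<subseteq> set ps"
      proof
        fix x assume "x \<in> set W"
        then obtain i where "i < length W" "x = W ! i" by (metis in_set_conv_nth)
        then obtain j where "j < m" "x = ps ! j" using all by blast
        then show "x \<in> set ps" using m_props len by simp
      qed
      fix i assume i: "Suc i < length W"
      then have "i < length W" by simp
      then obtain j where "j < m" "W ! i = ps ! j" using all by blast
      then show "{W ! i, W ! Suc i} \<in> path_edges ps" using walk_pe[OF W(1) i] by blast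
    qed
    then show False using W(3) by simp
  qed
  then obtain i0 where i0: "i0 < length W" "W ! i0 = ps ! m" by blast
  have t2: "W ! tau W = ps ! m" unfolding tau_def using i0(2) by (rule LeastI)
  have "tau W \<le> i0" unfolding tau_def using i0(2) by (rule Least_le)
  then show t1: "tau W < length W" using i0 by simp
  show t2': "W ! tau W = ps ! m" by (fact t2)
  show t3: "\<And>i. i < tau W \<Longrightarrow> W ! i \<noteq> ps ! m" unfolding tau_def by (rule not_less_Least)
  have "W ! 0 \<noteq> ps ! m" using W0 pinj m_props by auto
  then have "tau W \<noteq> 0" using t2 by (metis)
  then show t4: "1 \<le> tau W" by simp
  show t5: "\<And>i. i < tau W \<Longrightarrow> \<exists>j<m. W ! i = ps ! j"
  proof -
    fix i assume "i < tau W"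
    then show "\<exists>j<m. W ! i = ps ! j" using pre_walk[OF W(1,2)] t1 t3 by (meson le_less_trans order.strict_trans)
  qed
  show "\<And>i. Suc i \<le> tau W \<Longrightarrow> {W ! i, W ! Suc i} \<in> path_edges ps"
  proof -
    fix i assume i: "Suc i \<le> tau W"
    then have "i < tau W" by simp
    then obtain j where "j < m" "W ! i = ps ! j" using t5 by blast
    then show "{W ! i, W ! Suc i} \<in> path_edges ps" using walk_pe[OF W(1)] i t1 by simp
  qed
  have "tau W - 1 < tau W" using t4 by simp
  then obtain j where j: "j < m" "W ! (tau W - 1) = ps ! j" using t5 by blast
  have "Suc (tau W - 1) < length W" using t1 t4 by simp
  then have "(1 \<le> j \<and> W ! Suc (tau W - 1) = ps ! (j - 1)) \<or> W ! Suc (tau W - 1) = ps ! Suc j"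
    using walk_nbr[OF W(1) _ j(2) j(1)] by blast
  moreover have "W ! Suc (tau W - 1) = ps ! m" using t2 t4 by simp
  ultimately have "ps ! m = ps ! (j - 1) \<or> ps ! m = ps ! Suc j" by auto
  then have "m = Suc j"
  proof
    assume "ps ! m = ps ! (j - 1)"
    then have "m = j - 1" using pinj[of m "j - 1"] j m_props by simp
    then show ?thesis using j by simp
  next
    assume "ps ! m = ps ! Suc j"
    then show ?thesis using pinj[of m "Suc j"] j m_props by simp
  qed
  then show "W ! (tau W - 1) = ps ! (m - 1)" using j by simp
qed

end



context lsetup begin

lemma card_le:
  assumes l1: "1 \<le> l"
  shows "card {xs. is_walk S GE xs \<and> length xs = Suc l \<and> hd xs = ps ! 0 \<and> \<not> is_walk (set ps) (path_edges ps) xs}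
    \<le> card {xs. is_walk S GE xs \<and> length xs = Suc (l - 1) \<and> hd xs = ps ! k \<and> \<not> is_walk (set ps) (path_edges ps) xs}"
    (is "card ?L \<le> card ?R")
proof -
  define phi where "phi W = map (\<lambda>i. if Suc i < tau W then sig (W ! Suc i) else W ! Suc i) [0..<l]" for W
  have phi_nth: "phi W ! i = (if Suc i < tau W then sig (W ! Suc i) else W ! Suc i)" if "i < l" for W i
    using that unfolding phi_def by simp
  have phi_len: "length (phi W) = l" for W unfolding phi_def by simp
  have lsuc: "Suc (l - 1) = l" using l1 by simp
  have mapsto: "phi W \<in> ?R" if WL: "W \<in> ?L" for W
  proof -
    have W: "is_walk S GE W" "length W = Suc l" "hd W = ps ! 0" "\<not> is_walk (set ps) (path_edges ps) W"
      using WL by auto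
    note tp = tau_props[OF W(1) W(3) W(4)]
    define t where "t = tau W"
    have Wne: "W \<noteq> []" using W unfolding is_walk_def by simp
    have W0: "W ! 0 = ps ! 0" using W(3) Wne by (simp add: hd_conv_nth)
    have setW: "W ! i \<in> S" if "i < Suc l" for i
    proof -
      have "W ! i \<in> set W" using W(2) that by simp
      then show ?thesis using W(1) unfolding is_walk_def by blast
    qed
    have walk: "is_walk S GE (phi W)" unfolding is_walk_def
    proof (intro conjI allI impI)
      show "phi W \<noteq> []" using phi_len l1 by (metis le_zero_eq list.size(3) one_neq_zero)
      show "set (phi W) \<subseteq> S"
      proof
        fix x assume "x \<in> set (phi W)"
        then obtain i where i: "i < l" "x = phi W ! i" using phi_len by (metis in_set_conv_nth)
        show "x \<in> S"
        proof (cases "Suc i < tau W")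
          case True
          then obtain j where "j < m" "W ! Suc i = ps ! j" using tp(5) by blast
          then show ?thesis using i True phi_nth sig_S by simp
        next
          case False
          then show ?thesis using i phi_nth setW by simp
        qed
      qed
      fix i assume i: "Suc i < length (phi W)"
      then have il: "Suc i < l" using phi_len by simp
      show "{phi W ! i, phi W ! Suc i} \<in> GE"
      proof (cases "Suc (Suc i) < tau W")
        case True
        then obtain j where j: "j < m" "W ! Suc i = ps ! j" using tp(5)[of "Suc i"] by auto
        obtain j' where j': "j' < m" "W ! Suc (Suc i) = ps ! j'" using tp(5) True by blast
        have "Suc (Suc i) < length W" using W(2) il by simp
        then have nb: "(1 \<le> j \<and> W ! Suc (Suc i) = ps ! (j - 1)) \<or> W ! Suc (Suc i) = ps ! Suc j"
          using walk_nbr[OF W(1) _ j(2) j(1)] by blast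
        have e: "phi W ! i = sig (ps ! j)" "phi W ! Suc i = sig (W ! Suc (Suc i))"
          using phi_nth il True j by simp_all
        from nb show ?thesis
        proof
          assume a: "1 \<le> j \<and> W ! Suc (Suc i) = ps ! (j - 1)"
          then have "{sig (ps ! (j - 1)), sig (ps ! Suc (j - 1))} \<in> GE" using sig_edge[of "j - 1"] j by simp
          then show ?thesis using e a by (simp add: insert_commute)
        next
          assume a: "W ! Suc (Suc i) = ps ! Suc j"
          then have "Suc j = j'" using j' pinj[of "Suc j" j'] j m_props by simp
          then have "{sig (ps ! j), sig (ps ! Suc j)} \<in> GE" using sig_edge[of j] j' by simp
          then show ?thesis using e a by simp
        qed
      next
        case F1: False
        show ?thesis
        proof (cases "Suc i < tau W")
          case True
          then have ti: "tau W = Suc (Suc i)" using F1 by simp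
          then have "W ! Suc i = ps ! (m - 1)" using tp(7) by simp
          then have "phi W ! i = sig (ps ! (m - 1))" using phi_nth il True by simp
          moreover have "phi W ! Suc i = ps ! m" using phi_nth il F1 tp(2) ti by simp
          ultimately show ?thesis using sig_last_edge by simp
        next
          case False
          then have "phi W ! i = W ! Suc i" "phi W ! Suc i = W ! Suc (Suc i)" using phi_nth il F1 by simp_all
          moreover have "{W ! Suc i, W ! Suc (Suc i)} \<in> GE" using W(1,2) il unfolding is_walk_def by simp
          ultimately show ?thesis by simp
        qed
      qed
    qed
    have hd: "hd (phi W) = ps ! k"
    proof -
      have "phi W \<noteq> []" using phi_len l1 by (metis le_zero_eq list.size(3) one_neq_zero)
      then have h: "hd (phi W) = phi W ! 0" by (simp add: hd_conv_nth)
      show ?thesis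
      proof (cases "1 < tau W")
        case True
        have "Suc 0 < length W" using W(2) l1 by simp
        then have "(1 \<le> (0::nat) \<and> W ! Suc 0 = ps ! (0 - 1)) \<or> W ! Suc 0 = ps ! Suc 0"
          using walk_nbr[OF W(1) _ W0] m_props by simp
        then have "W ! 1 = ps ! 1" by simp
        then have "phi W ! 0 = sig (ps ! 1)" using phi_nth[of 0] l1 True by simp
        also have "\<dots> = ps ! k" using sigj[of 1] k1 by simp
        finally show ?thesis using h by simp
      next
        case False
        then have t1: "tau W = 1" using tp(4) by simp
        then have "ps ! 0 = ps ! (m - 1)" using tp(7) W0 by simp
        moreover have "m - 1 \<le> k" "1 \<le> m" using m_props by simp_all
        ultimately have "0 = m - 1" using pinj[of 0 "m - 1"] by simp
        then have "m = 1" using \<open>1 \<le> m\<close> by simp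
        then have "k = 1" using m_props by simp
        have "phi W ! 0 = W ! 1" using phi_nth[of 0] l1 t1 by simp
        also have "\<dots> = ps ! k" using tp(2) t1 \<open>m = 1\<close> \<open>k = 1\<close> by simp
        finally show ?thesis using h by simp
      qed
    qed
    have notP: "\<not> is_walk (set ps) (path_edges ps) (phi W)"
    proof
      assume P: "is_walk (set ps) (path_edges ps) (phi W)"
      have "is_walk (set ps) (path_edges ps) W" unfolding is_walk_def
      proof (intro conjI allI impI)
        show "W \<noteq> []" by fact
        show "set W \<subseteq> set ps"
        proof
          fix x assume "x \<in> set W"
          then obtain i where i: "i < Suc l" "x = W ! i" using W(2) by (metis in_set_conv_nth)
          show "x \<in> set ps"
          proof (cases "i < tau W")
            case True
            then obtain j where "j < m" "W ! i = ps ! j" using tp(5) by blast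
            then show ?thesis using i m_props len by simp
          next
            case False
            then have "1 \<le> i" using tp(4) by simp
            then have "phi W ! (i - 1) = W ! i" using phi_nth[of "i - 1" W] i False by simp
            moreover have "phi W ! (i - 1) \<in> set (phi W)" using phi_len i \<open>1 \<le> i\<close> by simp
            ultimately show ?thesis using P i unfolding is_walk_def by auto
          qed
        qed
        fix i assume i: "Suc i < length W"
        show "{W ! i, W ! Suc i} \<in> path_edges ps"
        proof (cases "Suc i \<le> tau W")
          case True then show ?thesis using tp(6) by blast
        next
          case False
          then have "1 \<le> i" using tp(4) by simp
          have "phi W ! (i - 1) = W ! i" using phi_nth[of "i - 1" W] i False \<open>1 \<le> i\<close> W(2) by simp
          moreover have "phi W ! Suc (i - 1) = W ! Suc i" using phi_nth[of i W] i False \<open>1 \<le> i\<close> W(2) by simp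
          moreover have "Suc (i - 1) < length (phi W)" using phi_len i \<open>1 \<le> i\<close> W(2) by simp
          ultimately show ?thesis using P unfolding is_walk_def by metis
        qed
      qed
      then show False using W(4) by simp
    qed
    show ?thesis using walk hd notP phi_len lsuc by simp
  qed
  have no_lt: "\<not> tau A < tau B" if A: "A \<in> ?L" and B: "B \<in> ?L" and eq: "phi A = phi B" for A B
  proof
    assume lt: "tau A < tau B"
    have WA: "is_walk S GE A" "length A = Suc l" "hd A = ps ! 0" "\<not> is_walk (set ps) (path_edges ps) A"
      using A by auto
    have WB: "is_walk S GE B" "length B = Suc l" "hd B = ps ! 0" "\<not> is_walk (set ps) (path_edges ps) B"
      using B by auto
    note ta = tau_props[OF WA(1) WA(3) WA(4)]
    note tb = tau_props[OF WB(1) WB(3) WB(4)]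
    define i where "i = tau A - 1"
    have i: "i < l" "Suc i = tau A" using ta(1) ta(4) WA(2) unfolding i_def by auto
    have "phi A ! i = ps ! m" using phi_nth[OF i(1)] i ta(2) by simp
    moreover obtain j where j: "j < m" "B ! tau A = ps ! j" using tb(5) lt by blast
    then have "phi B ! i = sig (ps ! j)" using phi_nth[OF i(1)] i lt by simp
    ultimately show False using eq sig_ne_m j by metis
  qed
  have inj: "inj_on phi ?L"
  proof (rule inj_onI)
    fix A B assume A: "A \<in> ?L" and B: "B \<in> ?L" and eq: "phi A = phi B"
    have WA: "is_walk S GE A" "length A = Suc l" "hd A = ps ! 0" "\<not> is_walk (set ps) (path_edges ps) A"
      using A by auto
    have WB: "is_walk S GE B" "length B = Suc l" "hd B = ps ! 0" "\<not> is_walk (set ps) (path_edges ps) B"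
      using B by auto
    note ta = tau_props[OF WA(1) WA(3) WA(4)]
    note tb = tau_props[OF WB(1) WB(3) WB(4)]
    have teq: "tau A = tau B" using no_lt[OF A B eq] no_lt[OF B A eq[symmetric]] by simp
    show "A = B"
    proof (rule nth_equalityI)
      show "length A = length B" using WA WB by simp
      fix n assume n: "n < length A"
      show "A ! n = B ! n"
      proof (cases n)
        case 0
        have "A \<noteq> []" "B \<noteq> []" using WA WB by auto
        then show ?thesis using 0 WA(3) WB(3) by (simp add: hd_conv_nth)
      next
        case (Suc i)
        then have il: "i < l" using n WA(2) by simp
        have e: "phi A ! i = phi B ! i" using eq by simp
        show ?thesis
        proof (cases "Suc i < tau A")
          case True
          obtain j1 where j1: "j1 < m" "A ! Suc i = ps ! j1" using ta(5) True by blast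
          obtain j2 where j2: "j2 < m" "B ! Suc i = ps ! j2" using tb(5) True teq by auto
          have "sig (ps ! j1) = sig (ps ! j2)" using e phi_nth[OF il] True teq j1 j2 by simp
          then have "j1 = j2" using sig_inj j1 j2 by blast
          then show ?thesis using Suc j1 j2 by simp
        next
          case False
          then show ?thesis using e phi_nth[OF il] teq Suc by simp
        qed
      qed
    qed
  qed
  have finS: "finite S" using BV finV finite_subset by auto
  have "?R \<subseteq> {xs. set xs \<subseteq> S \<and> length xs = Suc (l - 1)}" unfolding is_walk_def by blast
  then have finR: "finite ?R" using finite_lists_length_eq[OF finS] finite_subset by blast
  show ?thesis using card_inj_on_le[OF inj _ finR] mapsto by blast
qed

end

theorem lemma2:
  fixes V :: "'a set" and E :: "'a set set" and ps :: "'a list" and k l :: nat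
  assumes tree: "is_tree V E"
    and path: "is_path V E ps" and len: "length ps = Suc k" and k1: "k \<ge> 1"
    and deg2: "\<forall>i. 1 \<le> i \<and> i \<le> k - 1 \<longrightarrow> degree E (ps ! i) = 2"
    and B_def: "B = component V (E - path_edges ps) (ps ! k)"
    and B_nontriv: "B \<noteq> {ps ! k}"
    and kodd: "odd k"
    and l1: "l \<ge> 1"
  shows "int (walks_count l (ps ! 0) (B \<union> set ps) (induced_edges E (B \<union> set ps)))
           - int (walks_count l (ps ! 0) (set ps) (path_edges ps))
         \<le> int (walks_count (l - 1) (ps ! k) (B \<union> set ps) (induced_edges E (B \<union> set ps)))
           - int (walks_count (l - 1) (ps ! k) (set ps) (path_edges ps))"
proof -
  interpret lsetup V E ps k B
    using tree path len k1 deg2 B_def B_nontriv kodd by unfold_locales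
  have finS: "finite (B \<union> set ps)" using BV finV finite_subset by auto
  have PS: "set ps \<subseteq> B \<union> set ps" by blast
  have PE: "path_edges ps \<subseteq> induced_edges E (B \<union> set ps)"
  proof
    fix e assume "e \<in> path_edges ps"
    then obtain i where "Suc i < length ps" "e = {ps ! i, ps ! Suc i}" unfolding path_edges_def by blast
    then show "e \<in> induced_edges E (B \<union> set ps)" using pe_GE len by simp
  qed
  note c1 = count_split[OF finS PS PE, of l "ps ! 0"]
  note c2 = count_split[OF finS PS PE, of "l - 1" "ps ! k"]
  have "card {xs. is_walk (B \<union> set ps) (induced_edges E (B \<union> set ps)) xs \<and> length xs = Suc l \<and> hd xs = ps ! 0 \<and> \<not> is_walk (set ps) (path_edges ps) xs}
    \<le> card {xs. is_walk (B \<union> set ps) (induced_edges E (B \<union> set ps)) xs \<and> length xs = Suc (l - 1) \<and> hd xs = ps ! k \<and> \<not> is_walk (set ps) (path_edges ps) xs}"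
    using card_le[OF l1] .
  then show ?thesis using c1 c2 by linarith
qed


end
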